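(* Let $G \in \mathcal{C}_3$ be a digraph with at least one arc. Then in every $\vec{\chi}(G)$-dicolouring of $G$ there is at least one monochromatic arc, i.e. an arc both of whose endpoints lie in the same colour class.
   Context: All digraphs are finite and simple: no loops, no multiple arcs, and for two distinct vertices $u,v$ at most one of the arcs $uv$, $vu$ is present. A $k$-dicolouring of a digraph $D$ is a partition of $V(D)$ into $k$ sets $V_1,\dots,V_k$ (some possibly empty) such that each induced subdigraph $D[V_i]$ is acyclic (contains no directed cycle). The dichromatic number $\vec{\chi}(D)$ is the smallest $k$ such that $D$ admits a $k$-dicolouring. $TT_3$ denotes the transitive tournament on 3 vertices (a triangle oriented acyclically); a directed triangle is a directed cycle of length 3. $\mathcal{C}_3$ is the class of digraphs that contain no $TT_3$ as a subdigraph and contain no induced directed cycle of length at least $4$. *)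

theory Defs
  imports Main
begin

definition simple_digraph :: "'a set \<Rightarrow> ('a \<times> 'a) set \<Rightarrow> bool" where
  "simple_digraph V A \<longleftrightarrow> finite V \<and> A \<subseteq> V \<times> V \<and> (\<forall>x. (x, x) \<notin> A)
     \<and> (\<forall>x y. (x, y) \<in> A \<longrightarrow> (y, x) \<notin> A)"

definition induced_acyclic :: "('a \<times> 'a) set \<Rightarrow> 'a set \<Rightarrow> bool" where
  "induced_acyclic A S \<longleftrightarrow> acyclic (A \<inter> (S \<times> S))"

definition is_dicolouring :: "'a set \<Rightarrow> ('a \<times> 'a) set \<Rightarrow> nat \<Rightarrow> ('a \<Rightarrow> nat) \<Rightarrow> bool" where
  "is_dicolouring V A k c \<longleftrightarrow> (\<forall>v\<in>V. c v < k) \<and>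
     (\<forall>i<k. induced_acyclic A {v\<in>V. c v = i})"

definition dichromatic_number :: "'a set \<Rightarrow> ('a \<times> 'a) set \<Rightarrow> nat" where
  "dichromatic_number V A = (LEAST k. \<exists>c. is_dicolouring V A k c)"

definition contains_TT3 :: "'a set \<Rightarrow> ('a \<times> 'a) set \<Rightarrow> bool" where
  "contains_TT3 V A \<longleftrightarrow> (\<exists>a\<in>V. \<exists>b\<in>V. \<exists>c\<in>V. a \<noteq> b \<and> b \<noteq> c \<and> a \<noteq> c \<and>
     (a, b) \<in> A \<and> (b, c) \<in> A \<and> (a, c) \<in> A)"

definition induced_dicycle :: "'a set \<Rightarrow> ('a \<times> 'a) set \<Rightarrow> 'a list \<Rightarrow> bool" where
  "induced_dicycle V A cs \<longleftrightarrow> length cs \<ge> 2 \<and> distinct cs \<and> set cs \<subseteq> V \<and>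
     (\<forall>i<length cs. (cs ! i, cs ! ((i + 1) mod length cs)) \<in> A) \<and>
     (\<forall>i<length cs. \<forall>j<length cs. (cs ! i, cs ! j) \<in> A \<longrightarrow> j = (i + 1) mod length cs)"

definition in_C3 :: "'a set \<Rightarrow> ('a \<times> 'a) set \<Rightarrow> bool" where
  "in_C3 V A \<longleftrightarrow> \<not> contains_TT3 V A \<and>
     \<not> (\<exists>cs. induced_dicycle V A cs \<and> length cs \<ge> 4)"

end

theory Submission
  imports Defs
begin

definition closed_walk :: "('a \<times> 'a) set \<Rightarrow> 'a list \<Rightarrow> bool" where
  "closed_walk R xs \<longleftrightarrow> xs \<noteq> [] \<and> (\<forall>i<length xs. (xs!i, xs!(Suc i mod length xs)) \<in> R)"

lemma open_walk:
  assumes "(x,y) \<in> R\<^sup>+"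
  shows "\<exists>xs. xs \<noteq> [] \<and> hd xs = x \<and> (\<forall>i. Suc i < length xs \<longrightarrow> (xs!i, xs!(Suc i)) \<in> R) \<and> (last xs, y) \<in> R"
  using assms
proof (induction rule: trancl_induct)
  case (base y)
  then show ?case by (intro exI[of _ "[x]"]) auto
next
  case (step y z)
  then obtain xs where xs: "xs \<noteq> []" "hd xs = x" "\<forall>i. Suc i < length xs \<longrightarrow> (xs!i, xs!(Suc i)) \<in> R" "(last xs, y) \<in> R" by blast
  have "\<forall>i. Suc i < length (xs@[y]) \<longrightarrow> ((xs@[y])!i, (xs@[y])!(Suc i)) \<in> R"
  proof (intro allI impI)
    fix i assume i: "Suc i < length (xs@[y])"
    show "((xs@[y])!i, (xs@[y])!(Suc i)) \<in> R"
    proof (cases "Suc i < length xs")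
      case True then show ?thesis using xs(3) by (simp add: nth_append)
    next
      case False
      then have "i = length xs - 1" using i by simp
      then show ?thesis using xs(1,4) by (simp add: nth_append last_conv_nth)
    qed
  qed
  then show ?case using xs step by (intro exI[of _ "xs@[y]"]) auto
qed

lemma walk_exists:
  assumes "(x,x) \<in> R\<^sup>+"
  shows "\<exists>xs. closed_walk R xs"
proof -
  obtain xs where xs: "xs \<noteq> []" "hd xs = x" "\<forall>i. Suc i < length xs \<longrightarrow> (xs!i, xs!(Suc i)) \<in> R" "(last xs, x) \<in> R"
    using open_walk[OF assms] by blast
  have "\<forall>i<length xs. (xs!i, xs!(Suc i mod length xs)) \<in> R"
  proof (intro allI impI)
    fix i assume i: "i < length xs"
    show "(xs!i, xs!(Suc i mod length xs)) \<in> R"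
    proof (cases "Suc i < length xs")
      case True then show ?thesis using xs(3) by simp
    next
      case False
      then have si: "Suc i = length xs" using i by simp
      then have "i = length xs - 1" "Suc i mod length xs = 0" by simp_all
      then show ?thesis using xs by (simp add: last_conv_nth hd_conv_nth)
    qed
  qed
  then show ?thesis using xs(1) unfolding closed_walk_def by blast
qed

lemma shorten:
  assumes cw: "closed_walk R xs" and i: "i < length xs" and j: "j < length xs"
    and arc: "(xs!i, xs!j) \<in> R" and ne: "j \<noteq> Suc i mod length xs"
  shows "\<exists>ys. closed_walk R ys \<and> length ys < length xs"
proof -
  define n where "n = length xs"
  have n0: "n > 0" using i unfolding n_def by linarith
  define d where "d = (i + n - j) mod n"
  define m where "m = Suc d"
  have jd: "(j + d) mod n = i"
  proof -
    have "(j + d) mod n = (j + (i + n - j)) mod n" unfolding d_def by (simp add: mod_add_right_eq)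
    also have "j + (i + n - j) = i + n" using j n_def by simp
    finally show ?thesis using i n_def by simp
  qed
  have dlt: "d < n - 1"
  proof -
    have "d < n" unfolding d_def using n0 by simp
    moreover have "d \<noteq> n - 1"
    proof
      assume "d = n - 1"
      then have "(j + (n - 1)) mod n = i" using jd by simp
      then have "Suc (j + (n - 1)) mod n = Suc i mod n" by (metis mod_Suc_eq)
      moreover have "Suc (j + (n - 1)) = j + n" using n0 by simp
      ultimately have "j mod n = Suc i mod n" by simp
      then show False using ne j n_def by simp
    qed
    ultimately show ?thesis by simp
  qed
  define ys where "ys = map (\<lambda>t. xs!((j+t) mod n)) [0..<m]"
  have lys: "length ys = m" unfolding ys_def by simp
  have "\<forall>t<m. (ys!t, ys!(Suc t mod m)) \<in> R"
  proof (intro allI impI)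
    fix t assume t: "t < m"
    show "(ys!t, ys!(Suc t mod m)) \<in> R"
    proof (cases "Suc t < m")
      case True
      have e: "ys!t = xs!((j+t) mod n)" "ys!(Suc t mod m) = xs!((j + Suc t) mod n)"
        using t True unfolding ys_def by auto
      have "(xs!((j+t) mod n), xs!(Suc ((j+t) mod n) mod n)) \<in> R"
        using cw n0 unfolding closed_walk_def n_def by simp
      moreover have "Suc ((j+t) mod n) mod n = (j + Suc t) mod n" by (simp add: mod_Suc_eq)
      ultimately show ?thesis using e by simp
    next
      case False
      then have "t = d" using t m_def by simp
      have st: "Suc t mod m = 0" using \<open>t = d\<close> m_def by simp
      have "ys!t = xs!((j+t) mod n)" using t unfolding ys_def by (simp del: upt_Suc)
      moreover have "ys!0 = xs!((j+0) mod n)" using m_def unfolding ys_def by (simp del: upt_Suc)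
      ultimately have e: "ys!t = xs!i" "ys!(Suc t mod m) = xs!j"
        using st \<open>t = d\<close> jd j n_def by auto
      then show ?thesis using arc by simp
    qed
  qed
  then have "closed_walk R ys" unfolding closed_walk_def using lys m_def by auto
  moreover have "length ys < length xs" using lys m_def dlt n_def by simp
  ultimately show ?thesis by blast
qed

definition chordless :: "('a \<times> 'a) set \<Rightarrow> 'a list \<Rightarrow> bool" where
  "chordless R xs \<longleftrightarrow> (\<forall>i<length xs. \<forall>j<length xs. (xs!i, xs!j) \<in> R \<longrightarrow> j = Suc i mod length xs)"

lemma chordless_exists:
  "closed_walk R xs \<Longrightarrow> \<exists>ys. closed_walk R ys \<and> chordless R ys"
proof (induction "length xs" arbitrary: xs rule: less_induct)
  case less
  show ?case
  proof (cases "chordless R xs")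
    case True then show ?thesis using less by blast
  next
    case False
    then obtain i j where "i < length xs" "j < length xs" "(xs!i, xs!j) \<in> R" "j \<noteq> Suc i mod length xs"
      unfolding chordless_def by blast
    then obtain ys where "closed_walk R ys" "length ys < length xs"
      using shorten[OF less.prems] by blast
    then show ?thesis using less by blast
  qed
qed

lemma chordless_distinct:
  assumes cw: "closed_walk R xs" and ch: "chordless R xs"
  shows "distinct xs"
proof -
  define n where "n = length xs"
  have n0: "n > 0" using cw unfolding closed_walk_def n_def by simp
  show ?thesis
  unfolding distinct_conv_nth
  proof (intro allI impI)
    fix i j assume i: "i < length xs" and j: "j < length xs" and ij: "i \<noteq> j"
    show "xs!i \<noteq> xs!j"
    proof
      assume eq: "xs!i = xs!j"
      define p where "p = (i + n - 1) mod n"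
      have p: "p < n" unfolding p_def using n0 by simp
      have sp: "Suc p mod n = i"
      proof -
        have "Suc p mod n = Suc (i + n - 1) mod n" unfolding p_def by (simp add: mod_Suc_eq)
        also have "Suc (i + n - 1) = i + n" using n0 by simp
        finally show ?thesis using i n_def by simp
      qed
      have "(xs!p, xs!i) \<in> R" using cw p sp unfolding closed_walk_def n_def by metis
      then have "(xs!p, xs!j) \<in> R" using eq by simp
      then have "j = Suc p mod n" using ch p j unfolding chordless_def n_def by blast
      then show False using sp ij by simp
    qed
  qed
qed

lemma core:
  assumes sd: "simple_digraph V A"
    and noind: "\<not> (\<exists>cs. induced_dicycle V A cs \<and> length cs \<ge> 4)"
    and SV: "S \<subseteq> V"
    and noarc: "\<forall>u\<in>S. \<forall>v\<in>S. (u,v) \<in> A \<longrightarrow> c u \<noteq> (c v :: nat)"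
    and two: "\<forall>v\<in>S. c v = a \<or> c v = b"
  shows "acyclic (A \<inter> (S \<times> S))"
proof (rule ccontr)
  define R where "R = A \<inter> (S \<times> S)"
  assume "\<not> acyclic (A \<inter> (S \<times> S))"
  then have "\<not> (\<forall>x. (x,x) \<notin> R\<^sup>+)" unfolding acyclic_def R_def .
  then obtain x where "(x,x) \<in> R\<^sup>+" by blast
  from walk_exists[OF this] obtain xs0 where "closed_walk R xs0" by (elim exE)
  from chordless_exists[OF this] obtain xs where cw: "closed_walk R xs" and ch: "chordless R xs" by (elim exE conjE)
  have dist: "distinct xs" using chordless_distinct[OF cw ch] .
  define n where "n = length xs"
  have n0: "n > 0" using cw unfolding closed_walk_def n_def by simp
  have arcs: "\<And>i. i < n \<Longrightarrow> (xs!i, xs!(Suc i mod n)) \<in> R" using cw unfolding closed_walk_def n_def by blast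
  have inS: "set xs \<subseteq> S"
  proof
    fix y assume "y \<in> set xs"
    then obtain i where "i < n" "y = xs!i" unfolding n_def by (metis in_set_conv_nth)
    then show "y \<in> S" using arcs[of i] unfolding R_def by auto
  qed
  have noloop: "\<forall>x. (x,x) \<notin> A" and anti: "\<forall>x y. (x,y) \<in> A \<longrightarrow> (y,x) \<notin> A"
    using sd unfolding simple_digraph_def by auto
  have n1: "n \<noteq> 1"
  proof
    assume "n = 1"
    then have "(xs!0, xs!0) \<in> R" using arcs[of 0] by simp
    then show False using noloop unfolding R_def by auto
  qed
  have n2: "n \<noteq> 2"
  proof
    assume "n = 2"
    then have "(xs!0, xs!1) \<in> R" "(xs!1, xs!0) \<in> R" using arcs[of 0] arcs[of 1] by auto
    then show False using anti unfolding R_def by auto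
  qed
  have n3: "n \<noteq> 3"
  proof
    assume "n = 3"
    have e1: "Suc 0 mod n = 1" "Suc 1 mod n = 2" "Suc 2 mod n = 0" using \<open>n = 3\<close> by simp_all
    have "(xs!0, xs!1) \<in> R" using arcs[of 0] e1 \<open>n = 3\<close> by simp
    moreover have "(xs!1, xs!2) \<in> R" using arcs[of 1] e1 \<open>n = 3\<close> by (simp only: e1 numeral_less_iff)
    moreover have "(xs!2, xs!0) \<in> R" using arcs[of 2] e1 \<open>n = 3\<close> by (simp only: e1)
    ultimately have "(xs!0, xs!1) \<in> R" "(xs!1, xs!2) \<in> R" "(xs!2, xs!0) \<in> R" by blast+
    then have "c (xs!0) \<noteq> c (xs!1)" "c (xs!1) \<noteq> c (xs!2)" "c (xs!2) \<noteq> c (xs!0)"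
      using noarc unfolding R_def by auto
    moreover have "xs!0 \<in> S" "xs!1 \<in> S" "xs!2 \<in> S" using inS \<open>n = 3\<close> n_def by auto
    ultimately have "c (xs!0) \<in> {a,b}" "c (xs!1) \<in> {a,b}" "c (xs!2) \<in> {a,b}"
      "c (xs!0) \<noteq> c (xs!1)" "c (xs!1) \<noteq> c (xs!2)" "c (xs!2) \<noteq> c (xs!0)" using two by auto
    then show False by auto
  qed
  have "induced_dicycle V A xs"
    unfolding induced_dicycle_def
  proof (intro conjI)
    show "2 \<le> length xs" using n0 n1 unfolding n_def by linarith
    show "distinct xs" by (rule dist)
    show "set xs \<subseteq> V" using inS SV by blast
    show "\<forall>i<length xs. (xs ! i, xs ! ((i + 1) mod length xs)) \<in> A"
      using arcs unfolding R_def n_def by auto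
    show "\<forall>i<length xs. \<forall>j<length xs. (xs ! i, xs ! j) \<in> A \<longrightarrow> j = (i + 1) mod length xs"
    proof (intro allI impI)
      fix i j assume i: "i < length xs" and j: "j < length xs" and a: "(xs!i, xs!j) \<in> A"
      have "xs!i \<in> S" "xs!j \<in> S" using inS i j by auto
      then have "(xs!i, xs!j) \<in> R" using a unfolding R_def by auto
      then show "j = (i + 1) mod length xs" using ch i j unfolding chordless_def by simp
    qed
  qed
  moreover have "length xs \<ge> 4" using n0 n1 n2 n3 unfolding n_def by linarith
  ultimately show False using noind by blast
qed

theorem mainTheorem2:
  fixes V :: "'a set" and A :: "('a \<times> 'a) set" and c :: "'a \<Rightarrow> nat"
  assumes "simple_digraph V A"
    and "in_C3 V A"
    and "A \<noteq> {}"
    and "is_dicolouring V A (dichromatic_number V A) c"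
  shows "\<exists>(u, v)\<in>A. c u = c v"
proof (rule ccontr)
  assume nm: "\<not> (\<exists>(u, v)\<in>A. c u = c v)"
  define k where "k = dichromatic_number V A"
  have col: "\<forall>v\<in>V. c v < k" "\<forall>i<k. induced_acyclic A {v\<in>V. c v = i}"
    using assms(4) unfolding is_dicolouring_def k_def by auto
  obtain u v where uv: "(u,v) \<in> A" using assms(3) by auto
  have AV: "A \<subseteq> V \<times> V" using assms(1) unfolding simple_digraph_def by auto
  have "u \<in> V" "v \<in> V" using uv AV by auto
  have "c u \<noteq> c v" using nm uv by auto
  moreover have "c u < k" "c v < k" using col(1) \<open>u \<in> V\<close> \<open>v \<in> V\<close> by auto
  ultimately have k2: "k \<ge> 2" by linarith
  define c' where "c' = (\<lambda>v. if c v = k - 1 then 0 else c v)"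
  have "is_dicolouring V A (k - 1) c'"
    unfolding is_dicolouring_def
  proof (intro conjI ballI allI impI)
    fix v assume "v \<in> V"
    then show "c' v < k - 1" using col(1) k2 unfolding c'_def by fastforce
  next
    fix i assume i: "i < k - 1"
    show "induced_acyclic A {v \<in> V. c' v = i}"
    proof (cases "i = 0")
      case False
      then have "{v \<in> V. c' v = i} = {v \<in> V. c v = i}" using i unfolding c'_def by auto
      then show ?thesis using col(2) i by simp
    next
      case True
      have e: "{v \<in> V. c' v = i} = {v \<in> V. c v = 0 \<or> c v = k - 1}" using True unfolding c'_def by auto
      have "acyclic (A \<inter> ({v \<in> V. c v = 0 \<or> c v = k - 1} \<times> {v \<in> V. c v = 0 \<or> c v = k - 1}))"
        apply (rule core[where c=c and a=0 and b="k-1"])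
        using assms(1) assms(2) nm unfolding in_C3_def by auto
      then show ?thesis using e unfolding induced_acyclic_def by simp
    qed
  qed
  then have ex: "\<exists>c. is_dicolouring V A (k - 1) c" by blast
  have "dichromatic_number V A \<le> k - 1" unfolding dichromatic_number_def
    using Least_le[where P="\<lambda>k. \<exists>c. is_dicolouring V A k c", OF ex] .
  then show False using k2 k_def by simp
qed

end
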